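(* Let $\Pi_n=\{\pi_1,\ldots,\pi_n\}$ be a finite set of policies of a discrete mean-field game (setting in the context) with $J$ $\mu$-diff-affine. Then the restricted game on $\Pi_n$ admits a Nash equilibrium $\nu\in\Delta(\Pi_n)$ (i.e. $J(\pi_k,\mu(\nu))\le J(\pi(\nu),\mu(\nu))$ for all $k$), a correlated equilibrium and a coarse correlated equilibrium.
   Context: A discrete mean-field game consists of finite state set $\mathcal X$, finite action set $\mathcal A$, reward $r:\mathcal X\times\mathcal A\times\Delta(\mathcal X)\to\mathbb R$, transitions $p(x'\mid x,a)$ independent of the population distribution, initial distribution $\mu_0$. A policy is $\pi:\mathcal X\to\Delta(\mathcal A)$; $\mu^\pi$ is its state occupancy measure; $J(\pi,\mu)=\sum_{x,a}\mu^\pi(x)\pi(x,a)r(x,a,\mu)$. For $\nu\in\Delta(\Pi_n)$, $\mu(\nu)=\sum_j\nu(\pi_j)\mu^{\pi_j}$ and $J(\pi(\nu),\mu)=\sum_i\nu(\pi_i)J(\pi_i,\mu)$. $J$ is $\mu$-diff-affine if for all policies $\pi,\pi'$ the map $\mu\mapsto J(\pi,\mu)-J(\pi',\mu)$ is affine. A restricted coarse correlated equilibrium is a finitely supported distribution $\rho$ over $\Delta(\Pi_n)$ with $\mathbb E_{\nu\sim\rho}[J(\pi_k,\mu(\nu))-J(\pi(\nu),\mu(\nu))]\le0$ for all $k$; a restricted correlated equilibrium is such a $\rho$ with $\sum_\nu\rho(\nu)\nu(\pi_i)\big(J(\pi_k,\mu(\nu))-J(\pi_i,\mu(\nu))\big)\le0$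 for all $i,k$. *)

theory Defs
  imports Complex_Main
begin

definition is_dist :: "('x::finite \<Rightarrow> real) \<Rightarrow> bool" where
  "is_dist d \<longleftrightarrow> (\<forall>x. 0 \<le> d x) \<and> (\<Sum>x\<in>UNIV. d x) = 1"

definition is_policy :: "('x::finite \<Rightarrow> 'a::finite \<Rightarrow> real) \<Rightarrow> bool" where
  "is_policy pol \<longleftrightarrow> (\<forall>x. is_dist (pol x))"

text \<open>State distribution at time t when playing pol from mu0 under transitions p x a x' = p(x'|x,a).\<close>
fun state_dist :: "('x::finite \<Rightarrow> 'a::finite \<Rightarrow> 'x \<Rightarrow> real) \<Rightarrow> ('x \<Rightarrow> real)
    \<Rightarrow> ('x \<Rightarrow> 'a \<Rightarrow> real) \<Rightarrow> nat \<Rightarrow> 'x \<Rightarrow> real" where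
  "state_dist p mu0 pol 0 = mu0"
| "state_dist p mu0 pol (Suc t) =
     (\<lambda>x'. \<Sum>x\<in>UNIV. \<Sum>a\<in>UNIV. state_dist p mu0 pol t x * pol x a * p x a x')"

definition occ :: "real \<Rightarrow> ('x::finite \<Rightarrow> 'a::finite \<Rightarrow> 'x \<Rightarrow> real) \<Rightarrow> ('x \<Rightarrow> real)
    \<Rightarrow> ('x \<Rightarrow> 'a \<Rightarrow> real) \<Rightarrow> 'x \<Rightarrow> real" where
  "occ \<gamma> p mu0 pol = (\<lambda>x. (1 - \<gamma>) * (\<Sum>t. \<gamma> ^ t * state_dist p mu0 pol t x))"

definition J :: "('x::finite \<Rightarrow> 'a::finite \<Rightarrow> ('x \<Rightarrow> real) \<Rightarrow> real) \<Rightarrow>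
    ('x \<Rightarrow> 'a \<Rightarrow> 'x \<Rightarrow> real) \<Rightarrow> ('x \<Rightarrow> real) \<Rightarrow> real \<Rightarrow>
    ('x \<Rightarrow> 'a \<Rightarrow> real) \<Rightarrow> ('x \<Rightarrow> real) \<Rightarrow> real" where
  "J r p mu0 \<gamma> pol mu = (\<Sum>x\<in>UNIV. \<Sum>a\<in>UNIV. occ \<gamma> p mu0 pol x * pol x a * r x a mu)"

definition mu_diff_affine :: "(('x::finite \<Rightarrow> 'a::finite \<Rightarrow> real) \<Rightarrow> ('x \<Rightarrow> real) \<Rightarrow> real) \<Rightarrow> bool" where
  "mu_diff_affine Jf \<longleftrightarrow>
     (\<forall>pol pol'. is_policy pol \<longrightarrow> is_policy pol' \<longrightarrow>
        (\<forall>m m' t. is_dist m \<longrightarrow> is_dist m' \<longrightarrow> 0 \<le> t \<longrightarrow> t \<le> 1 \<longrightarrow>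
           Jf pol (\<lambda>x. t * m x + (1 - t) * m' x) - Jf pol' (\<lambda>x. t * m x + (1 - t) * m' x)
           = t * (Jf pol m - Jf pol' m) + (1 - t) * (Jf pol m' - Jf pol' m')))"

text \<open>Delta(Pi_n): weights on the indices 0..n-1 of the policies pis 0, ..., pis (n-1).\<close>
definition restr_simplex :: "nat \<Rightarrow> (nat \<Rightarrow> real) \<Rightarrow> bool" where
  "restr_simplex n \<nu> \<longleftrightarrow> (\<forall>i. 0 \<le> \<nu> i) \<and> (\<forall>i\<ge>n. \<nu> i = 0) \<and> (\<Sum>i<n. \<nu> i) = 1"

definition mix_mu :: "(('x \<Rightarrow> 'a \<Rightarrow> real) \<Rightarrow> 'x \<Rightarrow> real) \<Rightarrow> (nat \<Rightarrow> 'x \<Rightarrow> 'a \<Rightarrow> real)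
    \<Rightarrow> nat \<Rightarrow> (nat \<Rightarrow> real) \<Rightarrow> 'x \<Rightarrow> real" where
  "mix_mu occf pis n \<nu> = (\<lambda>x. \<Sum>j<n. \<nu> j * occf (pis j) x)"

definition J_mix :: "(('x \<Rightarrow> 'a \<Rightarrow> real) \<Rightarrow> ('x \<Rightarrow> real) \<Rightarrow> real) \<Rightarrow> (nat \<Rightarrow> 'x \<Rightarrow> 'a \<Rightarrow> real)
    \<Rightarrow> nat \<Rightarrow> (nat \<Rightarrow> real) \<Rightarrow> ('x \<Rightarrow> real) \<Rightarrow> real" where
  "J_mix Jf pis n \<nu> mu = (\<Sum>i<n. \<nu> i * Jf (pis i) mu)"

definition restricted_nash where
  "restricted_nash Jf occf pis n \<nu> \<longleftrightarrow> restr_simplex n \<nu> \<and>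
     (\<forall>k<n. Jf (pis k) (mix_mu occf pis n \<nu>) \<le> J_mix Jf pis n \<nu> (mix_mu occf pis n \<nu>))"

definition is_meta_dist :: "nat \<Rightarrow> ((nat \<Rightarrow> real) \<Rightarrow> real) \<Rightarrow> bool" where
  "is_meta_dist n \<rho> \<longleftrightarrow> finite {\<nu>. \<rho> \<nu> \<noteq> 0} \<and> (\<forall>\<nu>. 0 \<le> \<rho> \<nu>)
     \<and> (\<forall>\<nu>. \<rho> \<nu> \<noteq> 0 \<longrightarrow> restr_simplex n \<nu>) \<and> (\<Sum>\<nu>\<in>{\<nu>. \<rho> \<nu> \<noteq> 0}. \<rho> \<nu>) = 1"

definition restricted_cce where
  "restricted_cce Jf occf pis n \<rho> \<longleftrightarrow> is_meta_dist n \<rho> \<and>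
     (\<forall>k<n. (\<Sum>\<nu>\<in>{\<nu>. \<rho> \<nu> \<noteq> 0}. \<rho> \<nu> *
        (Jf (pis k) (mix_mu occf pis n \<nu>) - J_mix Jf pis n \<nu> (mix_mu occf pis n \<nu>))) \<le> 0)"

definition restricted_ce where
  "restricted_ce Jf occf pis n \<rho> \<longleftrightarrow> is_meta_dist n \<rho> \<and>
     (\<forall>i<n. \<forall>k<n. (\<Sum>\<nu>\<in>{\<nu>. \<rho> \<nu> \<noteq> 0}. \<rho> \<nu> * \<nu> i *
        (Jf (pis k) (mix_mu occf pis n \<nu>) - Jf (pis i) (mix_mu occf pis n \<nu>))) \<le> 0)"

end

theory Submission imports Defs "HOL-Analysis.Analysis" begin

lemma sd_dist:
  assumes "is_dist mu0" "\<forall>x a. is_dist (p x a)" "is_policy pol"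
  shows "is_dist (state_dist p mu0 pol t)"
proof (induction t)
  case 0 then show ?case using assms by simp
next
  case (Suc t)
  have nn: "\<forall>x. 0 \<le> state_dist p mu0 pol (Suc t) x"
    using Suc assms unfolding is_dist_def is_policy_def
    by (auto intro!: sum_nonneg mult_nonneg_nonneg)
  have "(\<Sum>x'\<in>UNIV. state_dist p mu0 pol (Suc t) x')
      = (\<Sum>x\<in>UNIV. \<Sum>a\<in>UNIV. state_dist p mu0 pol t x * pol x a * (\<Sum>x'\<in>UNIV. p x a x'))"
  proof -
    have "(\<Sum>x'\<in>UNIV. state_dist p mu0 pol (Suc t) x')
      = (\<Sum>x'\<in>UNIV. \<Sum>x\<in>UNIV. \<Sum>a\<in>UNIV. state_dist p mu0 pol t x * pol x a * p x a x')"
      by simp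
    also have "\<dots> = (\<Sum>x\<in>UNIV. \<Sum>x'\<in>UNIV. \<Sum>a\<in>UNIV. state_dist p mu0 pol t x * pol x a * p x a x')"
      by (rule sum.swap)
    also have "\<dots> = (\<Sum>x\<in>UNIV. \<Sum>a\<in>UNIV. \<Sum>x'\<in>UNIV. state_dist p mu0 pol t x * pol x a * p x a x')"
      by (rule sum.cong[OF refl], rule sum.swap)
    finally show ?thesis by (simp add: sum_distrib_left)
  qed
  also have "\<dots> = (\<Sum>x\<in>UNIV. state_dist p mu0 pol t x * (\<Sum>a\<in>UNIV. pol x a))"
    using assms(2) by (simp add: is_dist_def sum_distrib_left)
  also have "\<dots> = 1" using Suc assms(3) by (simp add: is_dist_def is_policy_def)
  finally show ?case using nn by (simp add: is_dist_def)
qed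

lemma dist_le1: "is_dist (d::'x::finite \<Rightarrow> real) \<Longrightarrow> d x \<le> 1"
  unfolding is_dist_def by (metis UNIV_I finite member_le_sum)

lemma occ_dist:
  assumes "is_dist mu0" "\<forall>x a. is_dist (p x a)" "is_policy pol" "0 \<le> \<gamma>" "\<gamma> < 1"
  shows "is_dist (occ \<gamma> p mu0 pol)"
proof -
  let ?s = "\<lambda>x t. \<gamma> ^ t * state_dist p mu0 pol t x"
  have sm: "summable (?s x)" for x
  proof (rule summable_comparison_test[of _ "\<lambda>t. \<gamma> ^ t"])
    show "summable (\<lambda>t. \<gamma> ^ t)" using assms by (simp add: summable_geometric)
    show "\<exists>N. \<forall>t\<ge>N. norm (?s x t) \<le> \<gamma> ^ t"
    proof (intro exI allI impI)
      fix t :: nat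
      have "0 \<le> state_dist p mu0 pol t x" "state_dist p mu0 pol t x \<le> 1"
        using sd_dist[OF assms(1-3), of t] dist_le1[OF sd_dist[OF assms(1-3), of t]]
        by (auto simp: is_dist_def)
      then show "norm (?s x t) \<le> \<gamma> ^ t"
        using assms(4) by (simp add: abs_mult mult_left_le)
    qed
  qed
  have nn: "0 \<le> occ \<gamma> p mu0 pol x" for x
    unfolding occ_def using sd_dist[OF assms(1-3)] assms sm
    by (auto simp: is_dist_def intro!: mult_nonneg_nonneg suminf_nonneg)
  have "(\<Sum>x\<in>UNIV. occ \<gamma> p mu0 pol x) = (1 - \<gamma>) * (\<Sum>x\<in>UNIV. \<Sum>t. ?s x t)"
    by (simp add: occ_def sum_distrib_left)
  also have "(\<Sum>x\<in>UNIV. \<Sum>t. ?s x t) = (\<Sum>t. \<Sum>x\<in>UNIV. ?s x t)"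
    using sm by (simp add: suminf_sum)
  also have "\<dots> = (\<Sum>t. \<gamma> ^ t)"
    using sd_dist[OF assms(1-3)] by (simp add: is_dist_def sum_distrib_left[symmetric])
  also have "\<dots> = 1 / (1 - \<gamma>)" using assms by (simp add: suminf_geometric)
  finally show ?thesis using nn assms by (simp add: is_dist_def)
qed

definition delta :: "'x \<Rightarrow> 'x \<Rightarrow> real" where "delta a = (\<lambda>y. if y = a then 1 else 0)"

lemma delta_dist: "is_dist (delta (a::'x::finite))"
  by (simp add: is_dist_def delta_def)

lemma delta_sum: "(\<Sum>x\<in>UNIV. delta a x * f x) = (f (a::'x::finite) :: real)"
  by (subst sum.remove[of _ a]) (auto simp: delta_def)

lemma affine_lin_aux:
  fixes D :: "('x::finite \<Rightarrow> real) \<Rightarrow> real"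
  assumes aff: "\<And>m m' t. is_dist m \<Longrightarrow> is_dist m' \<Longrightarrow> 0 \<le> t \<Longrightarrow> t \<le> 1 \<Longrightarrow>
      D (\<lambda>x. t * m x + (1 - t) * m' x) = t * D m + (1 - t) * D m'"
  shows "finite S \<Longrightarrow> is_dist m \<Longrightarrow> (\<forall>x. x \<notin> S \<longrightarrow> m x = 0) \<Longrightarrow> D m = (\<Sum>x\<in>UNIV. m x * D (delta x))"
proof (induction S arbitrary: m rule: finite_induct)
  case empty
  then show ?case by (simp add: is_dist_def)
next
  case (insert a S)
  have m0: "\<forall>x. 0 \<le> m x" and m1: "(\<Sum>x\<in>UNIV. m x) = 1" using insert(4) by (auto simp: is_dist_def)
  have split: "(\<Sum>x\<in>UNIV. m x) = m a + (\<Sum>x\<in>UNIV - {a}. m x)"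
    by (simp add: sum.remove)
  show ?case
  proof (cases "m a = 1")
    case True
    then have "(\<Sum>x\<in>UNIV - {a}. m x) = 0" using split m1 by simp
    then have "\<forall>x\<in>UNIV - {a}. m x = 0" using m0 by (simp add: sum_nonneg_eq_0_iff)
    then have "m = delta a" using True by (auto simp: delta_def)
    moreover have "(\<Sum>x\<in>UNIV. delta a x * D (delta x)) = D (delta a)"
      by (subst sum.remove[of _ a]) (auto simp: delta_def)
    ultimately show ?thesis by simp
  next
    case False
    have ma: "m a < 1" using False dist_le1[OF insert(4), of a] by simp
    define m' where "m' = (\<lambda>x. if x = a then 0 else m x / (1 - m a))"
    have "(\<Sum>x\<in>UNIV. m' x) = (\<Sum>x\<in>UNIV - {a}. m' x)"
      by (simp add: sum.remove[of _ a] m'_def)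
    also have "\<dots> = (\<Sum>x\<in>UNIV - {a}. m x) / (1 - m a)"
      by (simp add: m'_def sum_divide_distrib)
    also have "\<dots> = 1" using split m1 ma by simp
    finally have dm': "is_dist m'" using m0 ma by (simp add: is_dist_def m'_def)
    have sm': "\<forall>x. x \<notin> S \<longrightarrow> m' x = 0" using insert(5) by (simp add: m'_def)
    have IH: "D m' = (\<Sum>x\<in>UNIV. m' x * D (delta x))" using insert(3)[OF dm' sm'] .
    have meq: "m = (\<lambda>x. m a * delta a x + (1 - m a) * m' x)"
      using ma by (auto simp: m'_def delta_def)
    have "D m = m a * D (delta a) + (1 - m a) * D m'"
      by (subst meq, rule aff[OF delta_dist dm']) (use m0 ma in auto)
    also have "\<dots> = (\<Sum>x\<in>UNIV. (m a * delta a x + (1 - m a) * m' x) * D (delta x))"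
    proof -
      have "(\<Sum>x\<in>UNIV. (m a * delta a x + (1 - m a) * m' x) * D (delta x))
          = (\<Sum>x\<in>UNIV. m a * (delta a x * D (delta x)) + (1 - m a) * (m' x * D (delta x)))"
        by (simp add: algebra_simps)
      also have "\<dots> = m a * (\<Sum>x\<in>UNIV. delta a x * D (delta x)) + (1 - m a) * (\<Sum>x\<in>UNIV. m' x * D (delta x))"
        by (simp add: sum.distrib sum_distrib_left)
      finally show ?thesis by (simp add: IH delta_sum)
    qed
    also have "\<dots> = (\<Sum>x\<in>UNIV. m x * D (delta x))"
      by (subst (2) meq) simp
    finally show ?thesis .
  qed
qed

lemma affine_lin:
  fixes D :: "('x::finite \<Rightarrow> real) \<Rightarrow> real"
  assumes aff: "\<And>m m' t. is_dist m \<Longrightarrow> is_dist m' \<Longrightarrow> 0 \<le> t \<Longrightarrow> t \<le> 1 \<Longrightarrow>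
      D (\<lambda>x. t * m x + (1 - t) * m' x) = t * D m + (1 - t) * D m'"
    and "is_dist m"
  shows "D m = (\<Sum>x\<in>UNIV. m x * D (delta x))"
proof (rule affine_lin_aux[where S=UNIV])
  show "D (\<lambda>x. t * m x + (1 - t) * m' x) = t * D m + (1 - t) * D m'"
    if "is_dist m" "is_dist m'" "0 \<le> t" "t \<le> 1" for m m' t
    using aff that by blast
qed (use assms in auto)

lemma cont_Max:
  fixes f :: "nat \<Rightarrow> 'a::topological_space \<Rightarrow> real"
  assumes "\<And>j. continuous_on S (f j)"
  shows "continuous_on S (\<lambda>x. Max ((\<lambda>j. f j x) ` {..<Suc m}))"
proof (induction m)
  case 0 then show ?case using assms by (simp add: lessThan_Suc)
next
  case (Suc m)
  have "(\<lambda>x. Max ((\<lambda>j. f j x) ` {..<Suc (Suc m)})) = (\<lambda>x. max (f (Suc m) x) (Max ((\<lambda>j. f j x) ` {..<Suc m})))"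
    by (rule ext, subst lessThan_Suc[of "Suc m"], subst image_insert, rule Max_insert) auto
  then show ?case using Suc assms by (metis (no_types) continuous_on_max)
qed

lemma approx_eq:
  fixes ov cv :: "nat \<Rightarrow> real^'x::finite"
  assumes "n \<ge> 1" "\<epsilon> > 0"
  shows "\<exists>\<nu>. restr_simplex n \<nu> \<and> (\<forall>k<n. \<nu> k > 0 \<longrightarrow>
     (\<forall>j<n. cv j \<bullet> (\<Sum>i<n. \<nu> i *\<^sub>R ov i) \<le> cv k \<bullet> (\<Sum>i<n. \<nu> i *\<^sub>R ov i) + \<epsilon>))"
proof -
  obtain m where n: "n = Suc m" using assms by (cases n) auto
  define G where "G mu = Max ((\<lambda>j. cv j \<bullet> mu) ` {..<n})" for mu
  define wt where "wt mu k = max 0 (cv k \<bullet> mu - G mu + \<epsilon>)" for mu k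
  define W where "W mu = (\<Sum>k<n. wt mu k)" for mu
  define F where "F mu = (\<Sum>k<n. (wt mu k / W mu) *\<^sub>R ov k)" for mu
  define S where "S = convex hull (ov ` {..<n})"
  have Gge: "cv j \<bullet> mu \<le> G mu" if "j<n" for j mu
    unfolding G_def using that by (intro Max_ge) auto
  have Gin: "\<exists>j<n. G mu = cv j \<bullet> mu" for mu
  proof -
    have "G mu \<in> (\<lambda>j. cv j \<bullet> mu) ` {..<n}" unfolding G_def using n by (intro Max_in) auto
    then show ?thesis by auto
  qed
  have wt0: "wt mu k \<ge> 0" for mu k by (simp add: wt_def)
  have Wpos: "W mu \<ge> \<epsilon>" for mu
  proof -
    obtain j where j: "j < n" "G mu = cv j \<bullet> mu" using Gin by blast
    have "wt mu j = \<epsilon>" using j assms by (simp add: wt_def)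
    moreover have "wt mu j \<le> W mu" unfolding W_def using j wt0 by (intro member_le_sum) auto
    ultimately show ?thesis by simp
  qed
  have contG: "continuous_on S G"
    unfolding G_def n by (rule cont_Max) (intro continuous_intros)
  have contF: "continuous_on S F"
  proof -
    have contW: "continuous_on S W"
      unfolding W_def wt_def by (intro continuous_intros contG)
    have Wnz: "\<forall>x\<in>S. W x \<noteq> 0" using Wpos assms(2) by (metis order.strict_trans2 less_irrefl)
    have contwt: "continuous_on S (\<lambda>x. wt x k)" for k
      unfolding wt_def by (intro continuous_intros contG)
    show ?thesis unfolding F_def
      by (rule continuous_on_sum, rule continuous_on_scaleR[OF continuous_on_divide[OF contwt contW Wnz] continuous_on_const])
  qed
  have FS: "F mu \<in> S" for mu
    unfolding F_def S_def
  proof (rule convex_sum)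
    show "(\<Sum>i<n. wt mu i / W mu) = 1" using Wpos[of mu] assms(2)
      by (simp add: sum_divide_distrib[symmetric] W_def)
    show "0 \<le> wt mu i / W mu" for i using Wpos[of mu] assms(2) wt0[of mu i] by simp
    show "ov i \<in> convex hull ov ` {..<n}" if "i \<in> {..<n}" for i
      using that by (simp add: hull_inc)
  qed auto
  have "compact S" unfolding S_def by (intro compact_convex_hull finite_imp_compact) auto
  moreover have "convex S" unfolding S_def by simp
  moreover have "S \<noteq> {}" unfolding S_def using n by auto
  ultimately obtain mu where mu: "mu \<in> S" "F mu = mu"
    using brouwer[of S F] contF FS by blast
  define \<nu> where "\<nu> k = (if k < n then wt mu k / W mu else 0)" for k
  have sum1: "(\<Sum>i<n. \<nu> i) = 1" using Wpos[of mu] assms(2)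
    by (simp add: \<nu>_def sum_divide_distrib[symmetric] W_def)
  have rs: "restr_simplex n \<nu>" unfolding restr_simplex_def
    using sum1 Wpos[of mu] assms(2) wt0 by (auto simp: \<nu>_def)
  have eqmu: "(\<Sum>i<n. \<nu> i *\<^sub>R ov i) = mu" using mu(2) by (simp add: F_def \<nu>_def)
  show ?thesis
  proof (intro exI conjI allI impI)
    show "restr_simplex n \<nu>" by (rule rs)
    fix k j assume k: "k < n" "0 < \<nu> k" and j: "j < n"
    have "wt mu k > 0" using k Wpos[of mu] assms(2) by (simp add: \<nu>_def zero_less_divide_iff)
    then have "cv k \<bullet> mu - G mu + \<epsilon> > 0" by (simp add: wt_def)
    then show "cv j \<bullet> (\<Sum>i<n. \<nu> i *\<^sub>R ov i) \<le> cv k \<bullet> (\<Sum>i<n. \<nu> i *\<^sub>R ov i) + \<epsilon>"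
      using Gge[OF j, of mu] eqmu by simp
  qed
qed

lemma subseq_multi:
  fixes f :: "nat \<Rightarrow> nat \<Rightarrow> real"
  assumes "\<And>m i. \<bar>f m i\<bar> \<le> 1"
  shows "\<exists>r l. strict_mono r \<and> (\<forall>i<N. (\<lambda>k. f (r k) i) \<longlonglongrightarrow> l i)"
proof (induction N)
  case 0 then show ?case using strict_mono_id by blast
next
  case (Suc N)
  then obtain r l where r: "strict_mono r" "\<forall>i<N. (\<lambda>k. f (r k) i) \<longlonglongrightarrow> l i" by blast
  have "bounded (range (\<lambda>k. f (r k) N))"
    using assms by (intro boundedI[of _ 1]) auto
  then obtain l2 r2 where r2: "strict_mono (r2::nat\<Rightarrow>nat)" "((\<lambda>k. f (r k) N) \<circ> r2) \<longlonglongrightarrow> l2"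
    using bounded_imp_convergent_subsequence by blast
  show ?case
  proof (intro exI conjI allI impI)
    show "strict_mono (r \<circ> r2)" using r(1) r2(1) by (rule strict_mono_o)
    fix i assume i: "i < Suc N"
    show "(\<lambda>k. f ((r \<circ> r2) k) i) \<longlonglongrightarrow> (l(N := l2)) i"
    proof (cases "i = N")
      case True then show ?thesis using r2(2) by (simp add: o_def)
    next
      case False
      then have "i < N" using i by simp
      then have "((\<lambda>k. f (r k) i) \<circ> r2) \<longlonglongrightarrow> l i"
        using r(2) r2(1) by (intro LIMSEQ_subseq_LIMSEQ) auto
      then show ?thesis using False by (simp add: o_def)
    qed
  qed
qed

lemma exact_eq:
  fixes ov cv :: "nat \<Rightarrow> real^'x::finite"
  assumes "n \<ge> 1"
  shows "\<exists>\<nu>. restr_simplex n \<nu> \<and> (\<forall>k<n. \<nu> k > 0 \<longrightarrow>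
     (\<forall>j<n. cv j \<bullet> (\<Sum>i<n. \<nu> i *\<^sub>R ov i) \<le> cv k \<bullet> (\<Sum>i<n. \<nu> i *\<^sub>R ov i)))"
proof -
  define M where "M \<nu> = (\<Sum>i<n. \<nu> i *\<^sub>R ov i)" for \<nu>
  define e where "e m = inverse (real (Suc m))" for m
  have "\<forall>m. \<exists>\<nu>. restr_simplex n \<nu> \<and> (\<forall>k<n. \<nu> k > 0 \<longrightarrow>
     (\<forall>j<n. cv j \<bullet> M \<nu> \<le> cv k \<bullet> M \<nu> + e m))"
  proof
    fix m
    show "\<exists>\<nu>. restr_simplex n \<nu> \<and> (\<forall>k<n. \<nu> k > 0 \<longrightarrow>
     (\<forall>j<n. cv j \<bullet> M \<nu> \<le> cv k \<bullet> M \<nu> + e m))"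
      unfolding M_def using approx_eq[OF assms, of "e m" cv ov] by (simp add: e_def)
  qed
  then obtain nu where nu: "\<And>m. restr_simplex n (nu m)"
    "\<And>m k j. k < n \<Longrightarrow> nu m k > 0 \<Longrightarrow> j < n \<Longrightarrow> cv j \<bullet> M (nu m) \<le> cv k \<bullet> M (nu m) + e m"
    by metis
  have bnd: "\<bar>nu m i\<bar> \<le> 1" for m i
  proof (cases "i < n")
    case True
    have "nu m i \<le> (\<Sum>i<n. nu m i)"
      using nu(1)[of m] True by (intro member_le_sum) (auto simp: restr_simplex_def)
    then show ?thesis using nu(1)[of m] by (auto simp: restr_simplex_def)
  next
    case False then show ?thesis using nu(1)[of m] by (auto simp: restr_simplex_def)
  qed
  obtain r l where r: "strict_mono r" "\<forall>i<n. (\<lambda>k. nu (r k) i) \<longlonglongrightarrow> l i"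
    using subseq_multi[of nu, OF bnd] by blast
  define \<nu> where "\<nu> i = (if i < n then l i else 0)" for i
  have lim: "(\<lambda>k. nu (r k) i) \<longlonglongrightarrow> \<nu> i" for i
  proof (cases "i < n")
    case True then show ?thesis using r(2) by (simp add: \<nu>_def)
  next
    case False then show ?thesis using nu(1) by (simp add: \<nu>_def restr_simplex_def)
  qed
  have nn: "0 \<le> \<nu> i" for i
    using lim[of i] nu(1) by (intro LIMSEQ_le_const[of _ _ 0]) (auto simp: restr_simplex_def)
  have "(\<lambda>k. \<Sum>i<n. nu (r k) i) \<longlonglongrightarrow> (\<Sum>i<n. \<nu> i)"
    by (intro tendsto_sum lim)
  moreover have "(\<lambda>k. \<Sum>i<n. nu (r k) i) = (\<lambda>k. 1)" using nu(1) by (simp add: restr_simplex_def)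
  ultimately have s1: "(\<Sum>i<n. \<nu> i) = 1" using LIMSEQ_unique tendsto_const by metis
  have rs: "restr_simplex n \<nu>" using nn s1 by (simp add: restr_simplex_def \<nu>_def)
  have limM: "(\<lambda>k. M (nu (r k))) \<longlonglongrightarrow> M \<nu>"
    unfolding M_def by (intro tendsto_intros lim)
  have lime: "(\<lambda>k. e (r k)) \<longlonglongrightarrow> 0"
  proof -
    have "e \<longlonglongrightarrow> 0" unfolding e_def by (rule LIMSEQ_inverse_real_of_nat)
    then have "(e \<circ> r) \<longlonglongrightarrow> 0" using r(1) by (rule LIMSEQ_subseq_LIMSEQ)
    then show ?thesis by (simp add: o_def)
  qed
  show ?thesis
  proof (intro exI conjI allI impI)
    show "restr_simplex n \<nu>" by (rule rs)
    fix k j assume k: "k < n" "0 < \<nu> k" and j: "j < n"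
    have ev: "eventually (\<lambda>q. 0 < nu (r q) k) sequentially"
      using order_tendstoD(1)[OF lim[of k] k(2)] .
    have ev2: "eventually (\<lambda>q. cv j \<bullet> M (nu (r q)) \<le> cv k \<bullet> M (nu (r q)) + e (r q)) sequentially"
      using ev by eventually_elim (use nu(2) k j in blast)
    have l1: "(\<lambda>q. cv j \<bullet> M (nu (r q))) \<longlonglongrightarrow> cv j \<bullet> M \<nu>"
      by (intro tendsto_intros limM)
    have l2: "(\<lambda>q. cv k \<bullet> M (nu (r q)) + e (r q)) \<longlonglongrightarrow> cv k \<bullet> M \<nu> + 0"
      by (intro tendsto_intros limM lime)
    have "cv j \<bullet> M \<nu> \<le> cv k \<bullet> M \<nu> + 0"
      by (rule tendsto_le[OF _ l2 l1 ev2]) simp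
    then show "cv j \<bullet> (\<Sum>i<n. \<nu> i *\<^sub>R ov i) \<le> cv k \<bullet> (\<Sum>i<n. \<nu> i *\<^sub>R ov i)"
      by (simp add: M_def)
  qed
qed

theorem mainTheorem9:
  fixes r :: "'x::finite \<Rightarrow> 'a::finite \<Rightarrow> ('x \<Rightarrow> real) \<Rightarrow> real"
    and p :: "'x \<Rightarrow> 'a \<Rightarrow> 'x \<Rightarrow> real"
    and mu0 :: "'x \<Rightarrow> real"
    and \<gamma> :: real
    and pis :: "nat \<Rightarrow> 'x \<Rightarrow> 'a \<Rightarrow> real"
    and n :: nat
  assumes "is_dist mu0"
    and "\<forall>x a. is_dist (p x a)"
    and "0 \<le> \<gamma>" and "\<gamma> < 1"
    and "n \<ge> 1"
    and "\<forall>i<n. is_policy (pis i)"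
    and "mu_diff_affine (J r p mu0 \<gamma>)"
  shows "(\<exists>\<nu>. restricted_nash (J r p mu0 \<gamma>) (occ \<gamma> p mu0) pis n \<nu>)
       \<and> (\<exists>\<rho>. restricted_ce (J r p mu0 \<gamma>) (occ \<gamma> p mu0) pis n \<rho>)
       \<and> (\<exists>\<rho>. restricted_cce (J r p mu0 \<gamma>) (occ \<gamma> p mu0) pis n \<rho>)"
proof -
  define JJ where "JJ = J r p mu0 \<gamma>"
  define oc where "oc = occ \<gamma> p mu0"
  define D where "D k m = JJ (pis k) m - JJ (pis 0) m" for k m
  have ocd: "is_dist (oc (pis j))" if "j < n" for j
    unfolding oc_def using occ_dist[OF assms(1,2) _ assms(3,4)] assms(6) that by blast
  have Dlin: "D k m = (\<Sum>x\<in>UNIV. m x * D k (delta x))" if "k < n" "is_dist m" for k m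
  proof (rule affine_lin[OF _ that(2)])
    fix m m' :: "'x \<Rightarrow> real" and t :: real
    assume "is_dist m" "is_dist m'" "0 \<le> t" "t \<le> 1"
    moreover have "is_policy (pis k)" "is_policy (pis 0)" using assms(5,6) that(1) by auto
    ultimately show "D k (\<lambda>x. t * m x + (1 - t) * m' x) = t * D k m + (1 - t) * D k m'"
      using assms(7) unfolding mu_diff_affine_def D_def JJ_def by blast
  qed
  define cv where "cv k = (\<chi> x. D k (delta x))" for k
  define ov where "ov j = (\<chi> x. oc (pis j) x)" for j
  obtain \<nu> where rs: "restr_simplex n \<nu>" and eqm: "\<And>k j. k < n \<Longrightarrow> \<nu> k > 0 \<Longrightarrow> j < n \<Longrightarrow>
      cv j \<bullet> (\<Sum>i<n. \<nu> i *\<^sub>R ov i) \<le> cv k \<bullet> (\<Sum>i<n. \<nu> i *\<^sub>R ov i)"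
    using exact_eq[OF assms(5), of cv ov] by blast
  define Mf where "Mf = mix_mu oc pis n \<nu>"
  have nu0: "\<forall>i. 0 \<le> \<nu> i" and nu1: "(\<Sum>i<n. \<nu> i) = 1" using rs by (auto simp: restr_simplex_def)
  have Mfd: "is_dist Mf"
  proof -
    have "(\<Sum>x\<in>UNIV. Mf x) = (\<Sum>i<n. \<nu> i * (\<Sum>x\<in>UNIV. oc (pis i) x))"
      unfolding Mf_def mix_mu_def by (simp add: sum_distrib_left sum.swap[of _ UNIV])
    also have "\<dots> = (\<Sum>i<n. \<nu> i)" using ocd by (simp add: is_dist_def)
    finally show ?thesis using nu1 nu0 ocd unfolding is_dist_def Mf_def mix_mu_def
      by (auto intro!: sum_nonneg)
  qed
  have Dv: "D k Mf = cv k \<bullet> (\<Sum>i<n. \<nu> i *\<^sub>R ov i)" if "k < n" for k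
    using Dlin[OF that Mfd] unfolding inner_vec_def cv_def ov_def Mf_def mix_mu_def
    by (simp add: mult.commute)
  have best: "D k Mf \<le> D i Mf" if "i < n" "\<nu> i > 0" "k < n" for i k
    using eqm[OF that] Dv that by simp
  have trm: "\<nu> i * (JJ (pis k) Mf - JJ (pis i) Mf) \<le> 0" if "i < n" "k < n" for i k
  proof (cases "\<nu> i > 0")
    case True
    then show ?thesis using best[OF that(1) True that(2)] unfolding D_def
      by (simp add: mult_nonneg_nonpos)
  next
    case False then show ?thesis using nu0 by (metis mult_zero_left order.refl order_less_le)
  qed
  have nash: "JJ (pis k) Mf - J_mix JJ pis n \<nu> Mf \<le> 0" if "k < n" for k
  proof -
    have "JJ (pis k) Mf - J_mix JJ pis n \<nu> Mf = (\<Sum>i<n. \<nu> i * (JJ (pis k) Mf - JJ (pis i) Mf))"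
      using nu1 by (simp add: J_mix_def right_diff_distrib sum_subtractf sum_distrib_right[symmetric])
    also have "\<dots> \<le> 0" using trm that by (intro sum_nonpos) auto
    finally show ?thesis .
  qed
  define \<rho> where "\<rho> = (\<lambda>\<nu>'. if \<nu>' = \<nu> then (1::real) else 0)"
  have supp: "{\<nu>'. \<rho> \<nu>' \<noteq> 0} = {\<nu>}" by (auto simp: \<rho>_def)
  have md: "is_meta_dist n \<rho>" unfolding is_meta_dist_def supp using rs by (auto simp: \<rho>_def)
  show ?thesis
  proof (intro conjI exI)
    show "restricted_nash (J r p mu0 \<gamma>) (occ \<gamma> p mu0) pis n \<nu>"
      using rs nash unfolding restricted_nash_def JJ_def oc_def Mf_def by fastforce
    show "restricted_ce (J r p mu0 \<gamma>) (occ \<gamma> p mu0) pis n \<rho>"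
      using md trm unfolding restricted_ce_def supp JJ_def oc_def Mf_def by (simp add: \<rho>_def)
    show "restricted_cce (J r p mu0 \<gamma>) (occ \<gamma> p mu0) pis n \<rho>"
      using md nash unfolding restricted_cce_def supp JJ_def oc_def Mf_def by (simp add: \<rho>_def)
  qed
qed

end
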